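(* Let $\mathcal V$ be a finite set, $2\le k\le|\mathcal V|-2$, let $\Gamma\subset\binom{\mathcal V}{k}$ be a code such that $G:={\rm Aut}(\Gamma)\cap{\rm Sym}(\mathcal V)$ is transitive on $\mathcal V$. Then for $u\in\mathcal V$ the set $\Delta(u)=\bigcap\{\gamma'\in\Gamma : u\in\gamma'\}$ is a block of imprimitivity for $G$ in $\mathcal V$. In particular, if $G$ is primitive on $\mathcal V$, then $\Delta(u)=\{u\}$.
   Context: A code is a proper non-empty subset $\Gamma$ of $\binom{\mathcal V}{k}$, the set of $k$-subsets of $\mathcal V$ (vertex set of the Johnson graph $J(|\mathcal V|,k)$, adjacency meaning intersection of size $k-1$). ${\rm Aut}(\Gamma)$ is the setwise stabiliser of $\Gamma$ in the automorphism group of the Johnson graph. *)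

theory Defs
  imports "HOL-Combinatorics.Permutations"
begin

definition ksubsets :: "'a set \<Rightarrow> nat \<Rightarrow> 'a set set" where
  "ksubsets V k = {S. S \<subseteq> V \<and> card S = k}"

definition is_code :: "'a set \<Rightarrow> nat \<Rightarrow> 'a set set \<Rightarrow> bool" where
  "is_code V k \<Gamma> \<longleftrightarrow> \<Gamma> \<subseteq> ksubsets V k \<and> \<Gamma> \<noteq> {} \<and> \<Gamma> \<noteq> ksubsets V k"

definition code_sym_aut :: "'a set \<Rightarrow> 'a set set \<Rightarrow> ('a \<Rightarrow> 'a) set" where
  "code_sym_aut V \<Gamma> = {g. g permutes V \<and> (\<lambda>\<gamma>. g ` \<gamma>) ` \<Gamma> = \<Gamma>}"

definition transitive_on :: "('a \<Rightarrow> 'a) set \<Rightarrow> 'a set \<Rightarrow> bool" where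
  "transitive_on G V \<longleftrightarrow> (\<forall>u\<in>V. \<forall>v\<in>V. \<exists>g\<in>G. g u = v)"

definition is_block :: "('a \<Rightarrow> 'a) set \<Rightarrow> 'a set \<Rightarrow> 'a set \<Rightarrow> bool" where
  "is_block G V B \<longleftrightarrow> B \<subseteq> V \<and> B \<noteq> {} \<and> (\<forall>g\<in>G. g ` B = B \<or> g ` B \<inter> B = {})"

definition primitive_on :: "('a \<Rightarrow> 'a) set \<Rightarrow> 'a set \<Rightarrow> bool" where
  "primitive_on G V \<longleftrightarrow> transitive_on G V \<and>
     (\<forall>B. is_block G V B \<longrightarrow> B = V \<or> (\<exists>x. B = {x}))"

definition Delta :: "'a set set \<Rightarrow> 'a \<Rightarrow> 'a set" where
  "Delta \<Gamma> u = \<Inter> {\<gamma>\<in>\<Gamma>. u \<in> \<gamma>}"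

end

theory Submission
  imports Defs
begin

lemma Delta_image:
  assumes g: "g \<in> code_sym_aut V \<Gamma>"
  shows "g ` Delta \<Gamma> u = Delta \<Gamma> (g u)"
proof -
  have p: "g permutes V" and G: "(\<lambda>\<gamma>. g ` \<gamma>) ` \<Gamma> = \<Gamma>" using g by (auto simp: code_sym_aut_def)
  have b: "bij g" using p by (rule permutes_bij)
  hence inj: "inj g" and sur: "surj g" by (auto simp: bij_def)
  have S: "{\<gamma>\<in>\<Gamma>. g u \<in> \<gamma>} = (\<lambda>\<gamma>. g ` \<gamma>) ` {\<gamma>\<in>\<Gamma>. u \<in> \<gamma>}"
  proof
    show "{\<gamma>\<in>\<Gamma>. g u \<in> \<gamma>} \<subseteq> (\<lambda>\<gamma>. g ` \<gamma>) ` {\<gamma>\<in>\<Gamma>. u \<in> \<gamma>}"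
    proof
      fix \<gamma> assume "\<gamma> \<in> {\<gamma>\<in>\<Gamma>. g u \<in> \<gamma>}"
      then have "\<gamma> \<in> \<Gamma>" "g u \<in> \<gamma>" by auto
      then obtain \<gamma>' where "\<gamma>' \<in> \<Gamma>" "\<gamma> = g ` \<gamma>'" using G by (metis imageE)
      moreover have "u \<in> \<gamma>'" using \<open>g u \<in> \<gamma>\<close> calculation inj by (auto dest: injD)
      ultimately show "\<gamma> \<in> (\<lambda>\<gamma>. g ` \<gamma>) ` {\<gamma>\<in>\<Gamma>. u \<in> \<gamma>}" by auto
    qed
    show "(\<lambda>\<gamma>. g ` \<gamma>) ` {\<gamma>\<in>\<Gamma>. u \<in> \<gamma>} \<subseteq> {\<gamma>\<in>\<Gamma>. g u \<in> \<gamma>}"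
      using G by auto
  qed
  show ?thesis
  proof
    show "g ` Delta \<Gamma> u \<subseteq> Delta \<Gamma> (g u)"
      unfolding Delta_def S by auto
    show "Delta \<Gamma> (g u) \<subseteq> g ` Delta \<Gamma> u"
    proof
      fix x assume x: "x \<in> Delta \<Gamma> (g u)"
      obtain y where y: "x = g y" using sur by (metis surjD)
      have "y \<in> Delta \<Gamma> u"
        using x unfolding Delta_def S y by (auto dest: injD[OF inj])
      thus "x \<in> g ` Delta \<Gamma> u" using y by auto
    qed
  qed
qed

theorem lemma5p1:
  fixes V :: "'a set" and k :: nat and \<Gamma> :: "'a set set"
  assumes "finite V"
    and "2 \<le> k" and "k + 2 \<le> card V"
    and "is_code V k \<Gamma>"
    and "transitive_on (code_sym_aut V \<Gamma>) V"
  shows "(\<forall>u\<in>V. is_block (code_sym_aut V \<Gamma>) V (Delta \<Gamma> u))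
    \<and> (primitive_on (code_sym_aut V \<Gamma>) V \<longrightarrow> (\<forall>u\<in>V. Delta \<Gamma> u = {u}))"
proof -
  let ?G = "code_sym_aut V \<Gamma>"
  have sub: "\<Gamma> \<subseteq> ksubsets V k" and ne: "\<Gamma> \<noteq> {}" using assms(4) by (auto simp: is_code_def)
  obtain \<gamma>0 where g0: "\<gamma>0 \<in> \<Gamma>" using ne by auto
  have "card \<gamma>0 = k" "\<gamma>0 \<subseteq> V" using g0 sub by (auto simp: ksubsets_def)
  then obtain x0 where x0: "x0 \<in> \<gamma>0" using assms(2) by fastforce
  have x0V: "x0 \<in> V" using x0 \<open>\<gamma>0 \<subseteq> V\<close> by auto
  have ex: "\<exists>\<gamma>\<in>\<Gamma>. u \<in> \<gamma>" if u: "u \<in> V" for u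
  proof -
    obtain g where g: "g \<in> ?G" "g x0 = u" using assms(5) x0V u by (auto simp: transitive_on_def)
    have "g ` \<gamma>0 \<in> \<Gamma>" using g(1) g0 by (auto simp: code_sym_aut_def)
    thus ?thesis using g(2) x0 by auto
  qed
  have inV: "Delta \<Gamma> u \<subseteq> V" if "u \<in> V" for u
    using ex[OF that] sub by (auto simp: Delta_def ksubsets_def)
  have uin: "u \<in> Delta \<Gamma> u" for u by (auto simp: Delta_def)
  have fin: "finite (Delta \<Gamma> u)" if "u \<in> V" for u using inV[OF that] assms(1) finite_subset by blast
  have permV: "g ` V = V" if "g \<in> ?G" for g using that by (auto simp: code_sym_aut_def permutes_image)
  have injg: "inj g" if "g \<in> ?G" for g using that
    by (auto simp: code_sym_aut_def bij_def dest: permutes_bij)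
  have card_eq: "card (Delta \<Gamma> w) = card (Delta \<Gamma> u)" if uv: "u \<in> V" "w \<in> V" for u w
  proof -
    obtain h where h: "h \<in> ?G" "h u = w" using assms(5) uv unfolding transitive_on_def by meson
    have "Delta \<Gamma> w = h ` Delta \<Gamma> u" using Delta_image[OF h(1)] h(2) by simp
    thus ?thesis using injg[OF h(1)] by (simp add: card_image inj_on_subset)
  qed
  have sub_eq: "Delta \<Gamma> w = Delta \<Gamma> u" if "u \<in> V" "w \<in> Delta \<Gamma> u" for u w
  proof -
    have wV: "w \<in> V" using inV[OF that(1)] that(2) by auto
    have "Delta \<Gamma> w \<subseteq> Delta \<Gamma> u" using that(2) by (auto simp: Delta_def)
    thus ?thesis using card_eq[OF that(1) wV] fin[OF that(1)] by (simp add: card_subset_eq)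
  qed
  have blk: "is_block ?G V (Delta \<Gamma> u)" if u: "u \<in> V" for u
    unfolding is_block_def
  proof (intro conjI ballI)
    show "Delta \<Gamma> u \<subseteq> V" by (rule inV[OF u])
    show "Delta \<Gamma> u \<noteq> {}" using uin by auto
    fix g assume g: "g \<in> ?G"
    have guV: "g u \<in> V" using permV[OF g] u by auto
    show "g ` Delta \<Gamma> u = Delta \<Gamma> u \<or> g ` Delta \<Gamma> u \<inter> Delta \<Gamma> u = {}"
    proof (cases "g ` Delta \<Gamma> u \<inter> Delta \<Gamma> u = {}")
      case False
      then obtain w where w: "w \<in> Delta \<Gamma> (g u)" "w \<in> Delta \<Gamma> u"
        using Delta_image[OF g] by auto
      have "Delta \<Gamma> w = Delta \<Gamma> (g u)" using sub_eq[OF guV w(1)] .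
      moreover have "Delta \<Gamma> w = Delta \<Gamma> u" using sub_eq[OF u w(2)] .
      ultimately have "g ` Delta \<Gamma> u = Delta \<Gamma> u" using Delta_image[OF g, of u] by simp
      thus ?thesis by simp
    qed simp
  qed
  have prim: "Delta \<Gamma> u = {u}" if P: "primitive_on ?G V" and u: "u \<in> V" for u
  proof -
    have "Delta \<Gamma> u = V \<or> (\<exists>x. Delta \<Gamma> u = {x})" using P blk[OF u] by (auto simp: primitive_on_def)
    moreover have "Delta \<Gamma> u \<noteq> V"
    proof
      assume D: "Delta \<Gamma> u = V"
      obtain \<gamma> where \<gamma>: "\<gamma> \<in> \<Gamma>" "u \<in> \<gamma>" using ex[OF u] by auto
      have "Delta \<Gamma> u \<subseteq> \<gamma>" using \<gamma> by (auto simp: Delta_def)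
      moreover have "card \<gamma> = k" "\<gamma> \<subseteq> V" using \<gamma>(1) sub by (auto simp: ksubsets_def)
      ultimately have "\<gamma> = V" using D by auto
      thus False using \<open>card \<gamma> = k\<close> assms(3) by simp
    qed
    ultimately show ?thesis using uin[of u] by auto
  qed
  show ?thesis using blk prim by blast
qed

end
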